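(* For every graph $G$ on $m\ge 3$ vertices, $\lambda_2\ge d_3$, where $\lambda_2$ is the second largest eigenvalue of the Laplacian matrix $L(G)$ and $d_3$ is the third largest vertex degree of $G$.
   Context: All graphs are finite, simple, unweighted and undirected. $L(G)=D(G)-A(G)$ with $A(G)$ the adjacency matrix and $D(G)$ the diagonal matrix of degrees. Laplacian eigenvalues $\lambda_1\ge\lambda_2\ge\cdots$ and degrees $d_1\ge d_2\ge\cdots$ are listed in nonincreasing order with multiplicity. *)

theory Defs
  imports "Jordan_Normal_Form.Char_Poly" "HOL-Library.Multiset"
begin

text \<open>A finite simple graph on the vertex set {0..<m} is given by an edge relation
  E that is symmetric and irreflexive on {0..<m}; only its values on {0..<m} matter.\<close>

definition simple_graph :: "nat \<Rightarrow> (nat \<Rightarrow> nat \<Rightarrow> bool) \<Rightarrow> bool" where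
  "simple_graph m E \<longleftrightarrow> (\<forall>u<m. \<forall>v<m. E u v \<longleftrightarrow> E v u) \<and> (\<forall>v<m. \<not> E v v)"

definition degree :: "nat \<Rightarrow> (nat \<Rightarrow> nat \<Rightarrow> bool) \<Rightarrow> nat \<Rightarrow> nat" where
  "degree m E v = card {u. u < m \<and> E v u}"

definition adjacency_matrix :: "nat \<Rightarrow> (nat \<Rightarrow> nat \<Rightarrow> bool) \<Rightarrow> real mat" where
  "adjacency_matrix m E = mat m m (\<lambda>(i,j). if E i j then 1 else 0)"

definition degree_matrix :: "nat \<Rightarrow> (nat \<Rightarrow> nat \<Rightarrow> bool) \<Rightarrow> real mat" where
  "degree_matrix m E = mat m m (\<lambda>(i,j). if i = j then real (degree m E i) else 0)"

definition laplacian :: "nat \<Rightarrow> (nat \<Rightarrow> nat \<Rightarrow> bool) \<Rightarrow> real mat" where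
  "laplacian m E = degree_matrix m E - adjacency_matrix m E"

text \<open>Laplacian eigenvalues with (algebraic) multiplicity, listed in nonincreasing order:
  the roots of the characteristic polynomial (L is real symmetric, so it splits over the reals).\<close>
definition laplacian_eigenvalues :: "nat \<Rightarrow> (nat \<Rightarrow> nat \<Rightarrow> bool) \<Rightarrow> real list" where
  "laplacian_eigenvalues m E = rev (sorted_list_of_multiset (proots (char_poly (laplacian m E))))"

definition degree_sequence :: "nat \<Rightarrow> (nat \<Rightarrow> nat \<Rightarrow> bool) \<Rightarrow> nat list" where
  "degree_sequence m E = rev (sort (map (degree m E) [0..<m]))"

text \<open>lambda_k and d_k, 1-indexed as in the paper.\<close>
definition lap_eig :: "nat \<Rightarrow> (nat \<Rightarrow> nat \<Rightarrow> bool) \<Rightarrow> nat \<Rightarrow> real" where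
  "lap_eig m E k = laplacian_eigenvalues m E ! (k - 1)"

definition deg_k :: "nat \<Rightarrow> (nat \<Rightarrow> nat \<Rightarrow> bool) \<Rightarrow> nat \<Rightarrow> nat" where
  "deg_k m E k = degree_sequence m E ! (k - 1)"

end

theory Submission imports Defs "Jordan_Normal_Form.Schur_Decomposition" "Jordan_Normal_Form.Spectral_Radius" begin

lemma sym_real_eigenvector:
  fixes A :: "real mat"
  assumes A: "A \<in> carrier_mat n n" and sym: "A\<^sup>T = A" and n: "n > 0"
  shows "\<exists>e v. eigenvector A v e"
proof -
  let ?Ac = "map_mat complex_of_real A"
  have Ac: "?Ac \<in> carrier_mat n n" using A by auto
  from spectrum_non_empty[OF Ac n] obtain z where "eigenvalue ?Ac z"
    unfolding spectrum_def by auto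
  then obtain x where ev: "eigenvector ?Ac x z" unfolding eigenvalue_def by auto
  hence x: "x \<in> carrier_vec n" and x0: "x \<noteq> 0\<^sub>v n" and Ax: "?Ac *\<^sub>v x = z \<cdot>\<^sub>v x"
    unfolding eigenvector_def using A by auto
  have symij: "A $$ (i,j) = A $$ (j,i)" if "i < n" "j < n" for i j
    using arg_cong[OF sym, of "\<lambda>B. B $$ (j,i)"] that A by auto
  have comp: "(\<Sum>j<n. of_real (A$$(i,j)) * x$j) = z * x$i" if i: "i<n" for i
  proof -
    have "(?Ac *\<^sub>v x) $ i = z * x$i" using Ax i x by auto
    moreover have "(?Ac *\<^sub>v x) $ i = (\<Sum>j<n. of_real (A$$(i,j)) * x$j)"
      using i A x by (auto simp: scalar_prod_def row_def lessThan_atLeast0)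
    ultimately show ?thesis by simp
  qed
  define S where "S = (\<Sum>i<n. cnj (x$i) * (\<Sum>j<n. of_real (A$$(i,j)) * x$j))"
  define N where "N = (\<Sum>i<n. cnj (x$i) * x$i)"
  have S1: "S = z * N" unfolding S_def N_def using comp
    by (simp add: sum_distrib_left mult_ac)
  have "cnj S = (\<Sum>i<n. \<Sum>j<n. x$i * of_real (A$$(i,j)) * cnj (x$j))"
    unfolding S_def by (simp add: sum_distrib_left mult_ac)
  also have "\<dots> = (\<Sum>j<n. \<Sum>i<n. x$i * of_real (A$$(i,j)) * cnj (x$j))"
    by (rule sum.swap)
  also have "\<dots> = S" unfolding S_def
    by (auto simp: sum_distrib_left mult_ac symij intro!: sum.cong)
  finally have S2: "cnj S = S" .
  have Nr: "N = of_real (\<Sum>i<n. (cmod (x$i))^2)" unfolding N_def of_real_sum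
    by (rule sum.cong) (simp_all add: complex_norm_square mult.commute del: of_real_power)
  from x0 x obtain k where k: "k < n" "x$k \<noteq> 0" by (metis eq_vecI carrier_vecD index_zero_vec)
  have "0 < (cmod (x$k))^2" using k by auto
  also have "\<dots> \<le> (\<Sum>i<n. (cmod (x$i))^2)"
    by (rule member_le_sum) (use k in auto)
  finally have Npos: "N \<noteq> 0" unfolding Nr by (simp only: of_real_eq_0_iff)
  have "cnj z * cnj N = z * N" using S1 S2 complex_cnj_mult[of z N] by simp
  moreover have "cnj N = N" unfolding Nr by simp
  ultimately have czz: "cnj z = z" using Npos by simp
  have "Im z = 0" using arg_cong[OF czz, of Im] by simp
  hence zr: "z = of_real (Re z)" by (simp add: complex_eq_iff)
  have "poly (char_poly ?Ac) z = 0"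
    using eigenvalue_root_char_poly[OF Ac] \<open>eigenvalue ?Ac z\<close> by auto
  also have "char_poly ?Ac = map_poly of_real (char_poly A)"
    by (rule of_real_hom.char_poly_hom[OF A])
  finally have "poly (map_poly of_real (char_poly A)) (of_real (Re z) :: complex) = 0"
    using zr by simp
  hence "poly (char_poly A) (Re z) = 0" unfolding of_real_hom.poly_map_poly by simp
  hence "eigenvalue A (Re z)" using eigenvalue_root_char_poly[OF A] by auto
  thus ?thesis unfolding eigenvalue_def by auto
qed

lemma real_sq_pos: "(v::real vec) \<in> carrier_vec n \<Longrightarrow> v \<noteq> 0\<^sub>v n \<Longrightarrow> v \<bullet> v > 0"
  using conjugate_square_greater_0_vec[of v n] by simp

definition nrm :: "real vec \<Rightarrow> real vec" where
  "nrm v = (1 / sqrt (v \<bullet> v)) \<cdot>\<^sub>v v"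

lemma nrm_carrier[simp]: "v \<in> carrier_vec n \<Longrightarrow> nrm v \<in> carrier_vec n"
  unfolding nrm_def by simp

lemma smult_sprod_both: "(v::real vec) \<in> carrier_vec n \<Longrightarrow> w \<in> carrier_vec n \<Longrightarrow>
  (a \<cdot>\<^sub>v v) \<bullet> (b \<cdot>\<^sub>v w) = a * b * (v \<bullet> w)"
  by (simp add: smult_scalar_prod_distrib scalar_prod_smult_distrib)

lemma nrm_unit: assumes "v \<in> carrier_vec n" "v \<noteq> 0\<^sub>v n" shows "nrm v \<bullet> nrm v = 1"
proof -
  have p: "v \<bullet> v > 0" using real_sq_pos[OF assms] .
  have "nrm v \<bullet> nrm v = (1 / sqrt (v \<bullet> v)) * (1 / sqrt (v \<bullet> v)) * (v \<bullet> v)"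
    unfolding nrm_def using smult_sprod_both[OF assms(1) assms(1)] by simp
  also have "\<dots> = 1" using p by (simp add: field_simps)
  finally show ?thesis .
qed

lemma nrm_id: assumes "v \<bullet> v = 1" shows "nrm v = v"
  unfolding nrm_def assms by simp

abbreviation bd :: "'a::comm_ring_1 mat \<Rightarrow> nat \<Rightarrow> 'a mat \<Rightarrow> 'a mat" where
  "bd a n B \<equiv> four_block_mat a (0\<^sub>m 1 n) (0\<^sub>m n 1) B"

lemma bd_mult: assumes "a1 \<in> carrier_mat 1 1" "a2 \<in> carrier_mat 1 1"
  "B1 \<in> carrier_mat n n" "B2 \<in> carrier_mat n n"
  shows "bd a1 n B1 * bd a2 n B2 = bd (a1 * a2) n (B1 * B2)"
  by (subst mult_four_block_mat[OF assms(1) _ _ assms(3) assms(2) _ _ assms(4)], insert assms, auto)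

lemma bd_transpose: assumes "a1 \<in> carrier_mat 1 1" "B1 \<in> carrier_mat n n"
  shows "(bd a1 n B1)\<^sup>T = bd a1\<^sup>T n B1\<^sup>T"
  by (subst transpose_four_block_mat[OF assms(1) _ _ assms(2)], insert assms, auto)

lemma spectral_decomp:
  fixes A :: "real mat"
  assumes "A \<in> carrier_mat n n" "A\<^sup>T = A"
  shows "\<exists>U D. U \<in> carrier_mat n n \<and> D \<in> carrier_mat n n \<and> U\<^sup>T * U = 1\<^sub>m n \<and>
     U * U\<^sup>T = 1\<^sub>m n \<and> diagonal_mat D \<and> U\<^sup>T * A * U = D"
  using assms
proof (induction n arbitrary: A)
  case 0
  show ?case
    by (rule exI[of _ "1\<^sub>m 0"], rule exI[of _ A]) (use 0 in \<open>auto simp: diagonal_mat_def\<close>)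
next
  case (Suc n)
  note A = Suc.prems(1) and sym = Suc.prems(2)
  from sym_real_eigenvector[OF A sym] obtain e v where "eigenvector A v e" by auto
  hence v: "v \<in> carrier_vec (Suc n)" and v0: "v \<noteq> 0\<^sub>v (Suc n)" and Av: "A *\<^sub>v v = e \<cdot>\<^sub>v v"
    unfolding eigenvector_def using A by auto
  define u where "u = nrm v"
  have u: "u \<in> carrier_vec (Suc n)" unfolding u_def using v by simp
  have uu: "u \<bullet> u = 1" unfolding u_def by (rule nrm_unit[OF v v0])
  have u0: "u \<noteq> 0\<^sub>v (Suc n)" using uu u by auto
  have Au: "A *\<^sub>v u = e \<cdot>\<^sub>v u" unfolding u_def nrm_def using Av v A
    by (simp add: mult_mat_vec smult_smult_assoc mult.commute)
  interpret cof_vec_space "Suc n" "TYPE(real)" .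
  from basis_completion[OF u u0] have b: "set (basis_completion u) \<subseteq> carrier_vec (Suc n)"
    "distinct (basis_completion u)" "\<not> lin_dep (set (basis_completion u))"
    "length (basis_completion u) = Suc n" "hd (basis_completion u) = u" by auto
  define ws0 where "ws0 = gram_schmidt (Suc n) (basis_completion u)"
  from gram_schmidt_result[OF b(1) b(2) b(3) ws0_def]
  have ws0: "corthogonal ws0" "set ws0 \<subseteq> carrier_vec (Suc n)" "length ws0 = Suc n"
    using b(4) by auto
  obtain vs where bv: "basis_completion u = u # vs" using b(4) b(5)
    by (cases "basis_completion u") auto
  have hd0: "hd ws0 = u" unfolding ws0_def bv by (rule gram_schmidt_hd[OF u])
  define ws where "ws = map nrm ws0"
  have lws: "length ws = Suc n" using ws0 unfolding ws_def by simp
  have ws0c: "ws0 ! i \<in> carrier_vec (Suc n)" if "i < Suc n" for i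
    using ws0 that nth_mem[of i ws0] by auto
  have ws0nz: "ws0 ! i \<noteq> 0\<^sub>v (Suc n)" if "i < Suc n" for i
  proof
    assume "ws0 ! i = 0\<^sub>v (Suc n)"
    hence "ws0 ! i \<bullet>c ws0 ! i = 0" by simp
    with corthogonalD[OF ws0(1), of i i] ws0(3) that show False by auto
  qed
  have wsc: "ws ! i \<in> carrier_vec (Suc n)" if "i < Suc n" for i
    using ws0c[OF that] ws0(3) that unfolding ws_def by simp
  have orth: "ws ! i \<bullet> ws ! j = (if i = j then 1 else 0)" if "i < Suc n" "j < Suc n" for i j
  proof (cases "i = j")
    case True thus ?thesis using nrm_unit[OF ws0c ws0nz, of j] that ws0(3) unfolding ws_def by simp
  next
    case False
    have "ws0 ! i \<bullet> ws0 ! j = 0" using corthogonalD[OF ws0(1), of i j] ws0(3) that False by simp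
    thus ?thesis using False that ws0(3) smult_sprod_both[OF ws0c ws0c, of i j] unfolding ws_def nrm_def
      by simp
  qed
  have ws_0: "ws ! 0 = u" unfolding ws_def using ws0(3) hd0 nrm_id[OF uu]
    by (cases ws0) auto
  define W where "W = mat_of_cols (Suc n) ws"
  have W: "W \<in> carrier_mat (Suc n) (Suc n)" unfolding W_def using lws mat_of_cols_carrier(1)[of "Suc n" ws] by simp
  have Wt: "W\<^sup>T \<in> carrier_mat (Suc n) (Suc n)" using W by simp
  have colW: "col W i = ws ! i" if "i < Suc n" for i
    unfolding W_def using col_mat_of_cols[of i ws "Suc n"] that lws wsc by simp
  have WtW: "W\<^sup>T * W = 1\<^sub>m (Suc n)"
    by (rule eq_matI) (use W in \<open>auto simp: colW orth\<close>)
  have WWt: "W * W\<^sup>T = 1\<^sub>m (Suc n)" by (rule mat_mult_left_right_inverse[OF Wt W WtW])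
  define A' where "A' = W\<^sup>T * A * W"
  have A': "A' \<in> carrier_mat (Suc n) (Suc n)" unfolding A'_def using W A by auto
  have A'sym: "A'\<^sup>T = A'"
  proof -
    have "A'\<^sup>T = W\<^sup>T * (W\<^sup>T * A)\<^sup>T" unfolding A'_def
      using transpose_mult[OF mult_carrier_mat[OF Wt A] W] by simp
    also have "\<dots> = W\<^sup>T * (A\<^sup>T * W)" using transpose_mult[OF Wt A] by simp
    also have "\<dots> = W\<^sup>T * A\<^sup>T * W" using W A by simp
    finally show ?thesis unfolding A'_def sym .
  qed
  have A'col: "A' $$ (i, 0) = (if i = 0 then e else 0)" if i: "i < Suc n" for i
  proof -
    have "A' = W\<^sup>T * (A * W)" unfolding A'_def using W A by simp
    hence "A' $$ (i, 0) = row W\<^sup>T i \<bullet> col (A * W) 0" using i W A by simp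
    also have "\<dots> = ws ! i \<bullet> (A *\<^sub>v u)" using i W A colW[of 0] colW[OF i] ws_0 by (simp add: mult_mat_vec_def)
    also have "\<dots> = e * (ws ! i \<bullet> ws ! 0)" unfolding Au ws_0
      using scalar_prod_smult_distrib[OF wsc[OF i] u] by simp
    finally show ?thesis using orth[OF i, of 0] by simp
  qed
  have A'ij: "A' $$ (i, j) = A' $$ (j, i)" if "i < Suc n" "j < Suc n" for i j
    using arg_cong[OF A'sym, of "\<lambda>B. B $$ (j,i)"] that A' by auto
  define A3 where "A3 = mat n n (\<lambda>(i,j). A' $$ (Suc i, Suc j))"
  have A3: "A3 \<in> carrier_mat n n" unfolding A3_def by simp
  have A3sym: "A3\<^sup>T = A3" unfolding A3_def by (rule eq_matI) (auto simp: A'ij)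
  from Suc.IH[OF A3 A3sym] obtain U3 D3 where U3: "U3 \<in> carrier_mat n n" and D3: "D3 \<in> carrier_mat n n"
    and U3tU3: "U3\<^sup>T * U3 = 1\<^sub>m n" and diagD3: "diagonal_mat D3" and U3A3: "U3\<^sup>T * A3 * U3 = D3"
    by blast
  define E where "E = mat 1 1 (\<lambda>_. e)"
  have Ec: "E \<in> carrier_mat 1 1" unfolding E_def by simp
  have A'bd: "A' = bd E n A3"
    by (rule eq_matI) (use A' A'col A'ij in \<open>auto simp: E_def A3_def\<close>)
  define X where "X = bd (1\<^sub>m 1) n U3"
  have X: "X \<in> carrier_mat (Suc n) (Suc n)" unfolding X_def
    using four_block_carrier_mat[OF one_carrier_mat[of 1] U3] by simp
  have Xt: "X\<^sup>T = bd (1\<^sub>m 1) n U3\<^sup>T" unfolding X_def using bd_transpose[of "1\<^sub>m 1" U3 n] U3 by simp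
  have Xtc: "X\<^sup>T \<in> carrier_mat (Suc n) (Suc n)" using X by simp
  define U where "U = W * X"
  define D where "D = bd E n D3"
  have U: "U \<in> carrier_mat (Suc n) (Suc n)" unfolding U_def using W X by simp
  have Ut: "U\<^sup>T = X\<^sup>T * W\<^sup>T" unfolding U_def by (rule transpose_mult[OF W X])
  have UtU: "U\<^sup>T * U = 1\<^sub>m (Suc n)"
  proof -
    have "U\<^sup>T * U = X\<^sup>T * W\<^sup>T * (W * X)" unfolding Ut unfolding U_def ..
    also have "\<dots> = X\<^sup>T * (W\<^sup>T * (W * X))" by (rule assoc_mult_mat[OF Xtc Wt mult_carrier_mat[OF W X]])
    also have "W\<^sup>T * (W * X) = W\<^sup>T * W * X" by (rule assoc_mult_mat[OF Wt W X, symmetric])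
    also have "\<dots> = X" unfolding WtW using X by simp
    also have "X\<^sup>T * X = bd (1\<^sub>m 1) n (U3\<^sup>T * U3)" unfolding Xt unfolding X_def
      by (subst bd_mult) (use U3 in auto)
    also have "\<dots> = 1\<^sub>m (Suc n)" unfolding U3tU3 using four_block_one_mat[of 1 n] by simp
    finally show ?thesis .
  qed
  have UUt: "U * U\<^sup>T = 1\<^sub>m (Suc n)"
    by (rule mat_mult_left_right_inverse[OF _ U UtU]) (use U in simp)
  have UAU: "U\<^sup>T * A * U = D"
  proof -
    have "U\<^sup>T * A * U = X\<^sup>T * W\<^sup>T * A * (W * X)" unfolding Ut unfolding U_def ..
    also have "\<dots> = X\<^sup>T * (W\<^sup>T * A * W) * X"
    proof -
      have "X\<^sup>T * W\<^sup>T * A * (W * X) = X\<^sup>T * (W\<^sup>T * A) * (W * X)"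
        using assoc_mult_mat[OF Xtc Wt A] by simp
      also have "\<dots> = X\<^sup>T * ((W\<^sup>T * A) * (W * X))"
        by (rule assoc_mult_mat[OF Xtc mult_carrier_mat[OF Wt A] mult_carrier_mat[OF W X]])
      also have "(W\<^sup>T * A) * (W * X) = (W\<^sup>T * A * W) * X"
        by (rule assoc_mult_mat[OF mult_carrier_mat[OF Wt A] W X, symmetric])
      also have "X\<^sup>T * ((W\<^sup>T * A * W) * X) = X\<^sup>T * (W\<^sup>T * A * W) * X"
        by (rule assoc_mult_mat[OF Xtc _ X, symmetric]) (use A' in \<open>simp add: A'_def\<close>)
      finally show ?thesis .
    qed
    also have "\<dots> = X\<^sup>T * A' * X" unfolding A'_def ..
    also have "\<dots> = bd (1\<^sub>m 1 * E) n (U3\<^sup>T * A3) * bd (1\<^sub>m 1) n U3"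
      unfolding Xt unfolding X_def A'bd by (subst bd_mult) (use U3 A3 Ec in auto)
    also have "\<dots> = bd (1\<^sub>m 1 * E * 1\<^sub>m 1) n (U3\<^sup>T * A3 * U3)"
      by (rule bd_mult) (use U3 A3 Ec in auto)
    also have "\<dots> = D" unfolding U3A3 D_def using Ec by simp
    finally show ?thesis .
  qed
  have diagD: "diagonal_mat D"
    unfolding diagonal_mat_def D_def using diagD3 D3 unfolding diagonal_mat_def
    by (auto simp: E_def)
  have Dc: "D \<in> carrier_mat (Suc n) (Suc n)" unfolding D_def
    using four_block_carrier_mat[OF Ec D3] by simp
  show ?case using U Dc UtU UUt diagD UAU by blast
qed

lemma proots_lin: "proots (\<Prod>a\<leftarrow>as. [:-a,1:]) = mset (as :: 'a::idom list)"
proof (induction as)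
  case (Cons a as)
  have nz: "(\<Prod>a\<leftarrow>as. [:-a,1:]) \<noteq> 0" by (auto simp: prod_list_zero_iff)
  have "proots ([:-a,1:] * (\<Prod>a\<leftarrow>as. [:-a,1:])) = proots [:-a,1:] + proots (\<Prod>a\<leftarrow>as. [:-a,1:])"
    by (rule proots_mult) (use nz in auto)
  thus ?case using Cons proots_linear_factor[of "-a"] by simp
qed simp

lemma diag_mult_vec: assumes D: "D \<in> carrier_mat m m" and dg: "diagonal_mat D"
  and y: "y \<in> carrier_vec m"
shows "D *\<^sub>v y = vec m (\<lambda>i. D $$ (i,i) * y $ i)"
proof (rule eq_vecI)
  fix i assume "i < dim_vec (vec m (\<lambda>i. D $$ (i,i) * y $ i))"
  hence i: "i < m" by simp
  have "(D *\<^sub>v y) $ i = (\<Sum>j\<in>{0..<m}. D $$ (i,j) * y $ j)"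
    using i D y by (simp add: scalar_prod_def row_def)
  also have "\<dots> = (\<Sum>j\<in>{0..<m}. if j = i then D $$ (i,i) * y $ i else 0)"
    by (rule sum.cong) (use dg D i in \<open>auto simp: diagonal_mat_def\<close>)
  also have "\<dots> = D $$ (i,i) * y $ i" using i by simp
  finally show "(D *\<^sub>v y) $ i = vec m (\<lambda>i. D $$ (i,i) * y $ i) $ i" using i by simp
qed (use D in simp)

lemma rev_sort_ge:
  fixes xs :: "'a::linorder list"
  assumes k: "k \<le> length (filter (\<lambda>x. t \<le> x) xs)" "1 \<le> k"
  shows "t \<le> rev (sort xs) ! (k - 1)"
proof (rule ccontr)
  define ys where "ys = sort xs"
  define N where "N = length ys"
  have sorted: "sorted ys" unfolding ys_def by simp
  have cnt: "length (filter (\<lambda>x. t \<le> x) ys) = length (filter (\<lambda>x. t \<le> x) xs)"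
    unfolding ys_def by (metis mset_filter mset_sort size_mset)
  have kN: "k \<le> N" using k cnt unfolding N_def by (metis length_filter_le order_trans)
  assume "\<not> t \<le> rev (sort xs) ! (k - 1)"
  hence lt: "ys ! (N - k) < t" using kN k(2) unfolding ys_def N_def
    by (simp add: rev_nth not_le Suc_diff_Suc)
  have sub: "{i. i < N \<and> t \<le> ys ! i} \<subseteq> {N - k + 1..<N}"
  proof
    fix i assume "i \<in> {i. i < N \<and> t \<le> ys ! i}"
    hence i: "i < N" "t \<le> ys ! i" by auto
    have "\<not> i \<le> N - k"
    proof
      assume "i \<le> N - k"
      hence "ys ! i \<le> ys ! (N - k)" using sorted_nth_mono[OF sorted] kN k(2) unfolding N_def by auto
      with i lt show False by auto
    qed
    thus "i \<in> {N - k + 1..<N}" using i by auto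
  qed
  have "length (filter (\<lambda>x. t \<le> x) ys) = card {i. i < N \<and> t \<le> ys ! i}"
    unfolding N_def by (rule length_filter_conv_card)
  also have "\<dots> \<le> card {N - k + 1..<N}" by (rule card_mono[OF _ sub]) simp
  also have "\<dots> < k" using k(2) kN by simp
  finally show False using cnt k by simp
qed

lemma rev_sort_count:
  fixes xs :: "'a::linorder list"
  assumes k: "1 \<le> k" "k \<le> length xs"
  shows "k \<le> length (filter (\<lambda>x. rev (sort xs) ! (k - 1) \<le> x) xs)"
proof -
  define ys where "ys = sort xs"
  define N where "N = length ys"
  have sorted: "sorted ys" unfolding ys_def by simp
  have kN: "k \<le> N" using k unfolding N_def ys_def by simp
  define v where "v = rev (sort xs) ! (k - 1)"
  have v: "v = ys ! (N - k)" using kN k(1) unfolding v_def ys_def N_def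
    by (simp add: rev_nth Suc_diff_Suc)
  have cnt: "length (filter (\<lambda>x. v \<le> x) ys) = length (filter (\<lambda>x. v \<le> x) xs)"
    unfolding ys_def by (metis mset_filter mset_sort size_mset)
  have sub: "{N - k..<N} \<subseteq> {i. i < N \<and> v \<le> ys ! i}"
    using sorted_nth_mono[OF sorted] unfolding v N_def by auto
  have "k = card {N - k..<N}" using kN by simp
  also have "\<dots> \<le> card {i. i < N \<and> v \<le> ys ! i}" by (rule card_mono[OF _ sub]) simp
  also have "\<dots> = length (filter (\<lambda>x. v \<le> x) ys)"
    unfolding N_def by (rule length_filter_conv_card[symmetric])
  finally show ?thesis using cnt unfolding v_def by simp
qed

lemma second_eig_ge:
  fixes L :: "real mat"
  assumes L: "L \<in> carrier_mat m m" and sym: "L\<^sup>T = L"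
    and w1: "w1 \<in> carrier_vec m" and w2: "w2 \<in> carrier_vec m"
    and indep: "\<And>a b. (a,b) \<noteq> (0,0) \<Longrightarrow> a \<cdot>\<^sub>v w1 + b \<cdot>\<^sub>v w2 \<noteq> 0\<^sub>v m"
    and quad: "\<And>a b. t * ((a \<cdot>\<^sub>v w1 + b \<cdot>\<^sub>v w2) \<bullet> (a \<cdot>\<^sub>v w1 + b \<cdot>\<^sub>v w2))
        \<le> (a \<cdot>\<^sub>v w1 + b \<cdot>\<^sub>v w2) \<bullet> (L *\<^sub>v (a \<cdot>\<^sub>v w1 + b \<cdot>\<^sub>v w2))"
  shows "t \<le> rev (sorted_list_of_multiset (proots (char_poly L))) ! 1"
proof -
  from spectral_decomp[OF L sym] obtain U D where U: "U \<in> carrier_mat m m" and D: "D \<in> carrier_mat m m"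
    and UtU: "U\<^sup>T * U = 1\<^sub>m m" and UUt: "U * U\<^sup>T = 1\<^sub>m m" and dg: "diagonal_mat D"
    and UDU: "U\<^sup>T * L * U = D" by blast
  have Ut: "U\<^sup>T \<in> carrier_mat m m" using U by simp
  have LUDU: "L = U * D * U\<^sup>T"
  proof -
    have "U * D * U\<^sup>T = U * (U\<^sup>T * L * U) * U\<^sup>T" unfolding UDU ..
    also have "\<dots> = (U * U\<^sup>T) * L * (U * U\<^sup>T)" using U Ut L
      by (simp add: assoc_mult_mat[of _ m m _ m _ m])
    also have "\<dots> = L" unfolding UUt using L by simp
    finally show ?thesis by simp
  qed
  have "similar_mat_wit L D U U\<^sup>T" unfolding similar_mat_wit_def Let_def
    using L D U Ut UtU UUt LUDU by auto
  hence "char_poly L = char_poly D" using char_poly_similar unfolding similar_mat_def by blast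
  also have "\<dots> = (\<Prod>a\<leftarrow>diag_mat D. [:-a,1:])"
    by (rule char_poly_upper_triangular[OF D]) (use dg D in \<open>auto simp: upper_triangular_def diagonal_mat_def\<close>)
  finally have cp: "char_poly L = (\<Prod>a\<leftarrow>diag_mat D. [:-a,1:])" .
  define \<mu> where "\<mu> i = D $$ (i,i)" for i
  have dm: "diag_mat D = map \<mu> [0..<m]" unfolding diag_mat_def \<mu>_def using D by simp
  have eq: "rev (sorted_list_of_multiset (proots (char_poly L))) = rev (sort (map \<mu> [0..<m]))"
    unfolding cp proots_lin dm sorted_list_of_multiset_mset ..
  define S where "S = {i. i < m \<and> t \<le> \<mu> i}"
  have lenS: "length (filter (\<lambda>x. t \<le> x) (map \<mu> [0..<m])) = card S"
  proof -
    have "length (filter (\<lambda>x. t \<le> x) (map \<mu> [0..<m])) = length (filter (\<lambda>i. t \<le> \<mu> i) [0..<m])"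
      by (simp add: filter_map comp_def)
    also have "\<dots> = card (set (filter (\<lambda>i. t \<le> \<mu> i) [0..<m]))"
      by (rule distinct_card[symmetric]) simp
    also have "set (filter (\<lambda>i. t \<le> \<mu> i) [0..<m]) = S" unfolding S_def by auto
    finally show ?thesis .
  qed
  have "2 \<le> card S"
  proof (rule ccontr)
    assume "\<not> 2 \<le> card S"
    hence "card S \<le> Suc 0" by simp
    hence one: "\<forall>a\<in>S. \<forall>b\<in>S. a = b" using card_le_Suc0_iff_eq[of S] unfolding S_def by simp
    obtain s where sS: "\<And>i. i \<in> S \<Longrightarrow> i = s"
    proof (cases "S = {}")
      case True thus ?thesis using that by auto
    next
      case False then obtain s where "s \<in> S" by auto
      thus ?thesis using that one by auto
    qed
    define y1 where "y1 = U\<^sup>T *\<^sub>v w1"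
    define y2 where "y2 = U\<^sup>T *\<^sub>v w2"
    define a where "a = (if y1 $ s = 0 \<and> y2 $ s = 0 then 1 else y2 $ s)"
    define b where "b = (if y1 $ s = 0 \<and> y2 $ s = 0 then 0 else - y1 $ s)"
    have ab: "(a, b) \<noteq> (0, 0)" unfolding a_def b_def by auto
    have abs: "a * y1 $ s + b * y2 $ s = 0" unfolding a_def b_def by auto
    define x where "x = a \<cdot>\<^sub>v w1 + b \<cdot>\<^sub>v w2"
    have x: "x \<in> carrier_vec m" unfolding x_def using w1 w2 by simp
    have x0: "x \<noteq> 0\<^sub>v m" unfolding x_def by (rule indep[OF ab])
    define y where "y = U\<^sup>T *\<^sub>v x"
    have y: "y \<in> carrier_vec m" unfolding y_def using Ut x by simp
    have yab: "y = a \<cdot>\<^sub>v y1 + b \<cdot>\<^sub>v y2" unfolding y_def x_def y1_def y2_def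
      using mult_add_distrib_mat_vec[OF Ut, of "a \<cdot>\<^sub>v w1" "b \<cdot>\<^sub>v w2"] mult_mat_vec[OF Ut] w1 w2 by simp
    have ys: "y $ i = 0" if "i \<in> S" for i
    proof -
      have i: "i = s" "s < m" using sS[OF that] that unfolding S_def by auto
      thus ?thesis using abs unfolding yab y1_def y2_def using Ut w1 w2 by simp
    qed
    have xUy: "x = U *\<^sub>v y" unfolding y_def using assoc_mult_mat_vec[OF U Ut x] UUt x by simp
    have y0: "y \<noteq> 0\<^sub>v m" using x0 xUy U by auto
    then obtain k where k: "k < m" "y $ k \<noteq> 0" using y by (metis eq_vecI carrier_vecD index_zero_vec)
    have Dy: "D *\<^sub>v y = vec m (\<lambda>i. \<mu> i * y $ i)" unfolding \<mu>_def by (rule diag_mult_vec[OF D dg y])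
    have "x \<bullet> (L *\<^sub>v x) = x \<bullet> (U *\<^sub>v (D *\<^sub>v y))" unfolding LUDU y_def
      using U D Ut x by (simp add: assoc_mult_mat_vec[of _ m m _ m])
    also have "\<dots> = y \<bullet> (D *\<^sub>v y)" unfolding y_def
      using transpose_vec_mult_scalar[OF U, of "D *\<^sub>v (U\<^sup>T *\<^sub>v x)" x] D Ut x by simp
    also have "\<dots> = (\<Sum>i<m. \<mu> i * (y $ i)^2)" unfolding Dy scalar_prod_def
      by (simp add: lessThan_atLeast0 power2_eq_square mult_ac)
    finally have q1: "x \<bullet> (L *\<^sub>v x) = (\<Sum>i<m. \<mu> i * (y $ i)^2)" .
    have "x \<bullet> x = x \<bullet> (U *\<^sub>v y)" using xUy by simp
    also have "\<dots> = y \<bullet> y" unfolding y_def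
      using transpose_vec_mult_scalar[OF U, of "U\<^sup>T *\<^sub>v x" x] Ut x by simp
    also have "\<dots> = (\<Sum>i<m. (y $ i)^2)" using y by (simp add: scalar_prod_def lessThan_atLeast0 power2_eq_square)
    finally have q2: "x \<bullet> x = (\<Sum>i<m. (y $ i)^2)" .
    have "0 \<le> x \<bullet> (L *\<^sub>v x) - t * (x \<bullet> x)" using quad[of a b] unfolding x_def by simp
    also have "\<dots> = (\<Sum>i<m. (\<mu> i - t) * (y $ i)^2)" unfolding q1 q2
      by (simp add: sum_distrib_left sum_subtractf algebra_simps)
    also have "\<dots> < 0"
    proof -
      have neg: "(\<mu> i - t) * (y $ i)^2 \<le> 0" if "i < m" for i
      proof (cases "t \<le> \<mu> i")
        case True hence "i \<in> S" unfolding S_def using that by auto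
        thus ?thesis using ys by simp
      next
        case False thus ?thesis by (simp add: mult_nonpos_nonneg)
      qed
      have "\<not> t \<le> \<mu> k" using ys[of k] k unfolding S_def by auto
      hence negk: "(\<mu> k - t) * (y $ k)^2 < 0" using k by (simp add: mult_neg_pos)
      have "(\<Sum>i<m. (\<mu> i - t) * (y $ i)^2) = (\<mu> k - t) * (y $ k)^2 + (\<Sum>i\<in>{..<m} - {k}. (\<mu> i - t) * (y $ i)^2)"
        by (rule sum.remove) (use k in auto)
      also have "(\<Sum>i\<in>{..<m} - {k}. (\<mu> i - t) * (y $ i)^2) \<le> 0"
        by (rule sum_nonpos) (use neg in auto)
      finally show ?thesis using negk by simp
    qed
    finally show False by simp
  qed
  hence "2 \<le> length (filter (\<lambda>x. t \<le> x) (map \<mu> [0..<m]))" using lenS by simp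
  from rev_sort_ge[OF this] show ?thesis unfolding eq by simp
qed

lemma qf_supp:
  fixes L :: "real mat"
  assumes L: "L \<in> carrier_mat m m" and x: "x \<in> carrier_vec m" and T: "T \<subseteq> {..<m}"
    and z: "\<And>i. i < m \<Longrightarrow> i \<notin> T \<Longrightarrow> x $ i = 0"
  shows "x \<bullet> (L *\<^sub>v x) = (\<Sum>i\<in>T. \<Sum>j\<in>T. x $ i * L $$ (i,j) * x $ j)"
    and "x \<bullet> x = (\<Sum>i\<in>T. x $ i * x $ i)"
proof -
  have fin: "finite T" using T finite_subset by blast
  have red: "(\<Sum>i\<in>{0..<m}. f i) = (\<Sum>i\<in>T. f i)" if "\<And>i. i < m \<Longrightarrow> i \<notin> T \<Longrightarrow> f i = 0" for f :: "nat \<Rightarrow> real"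
    by (rule sum.mono_neutral_right) (use T that fin in auto)
  have "x \<bullet> (L *\<^sub>v x) = (\<Sum>i\<in>{0..<m}. x $ i * (\<Sum>j\<in>{0..<m}. L $$ (i,j) * x $ j))"
    using L x by (simp add: scalar_prod_def row_def)
  also have "\<dots> = (\<Sum>i\<in>T. x $ i * (\<Sum>j\<in>{0..<m}. L $$ (i,j) * x $ j))"
    by (rule red) (use z in auto)
  also have "\<dots> = (\<Sum>i\<in>T. x $ i * (\<Sum>j\<in>T. L $$ (i,j) * x $ j))"
    by (rule sum.cong[OF refl], subst red) (use z in auto)
  also have "\<dots> = (\<Sum>i\<in>T. \<Sum>j\<in>T. x $ i * L $$ (i,j) * x $ j)"
    by (simp add: sum_distrib_left mult_ac)
  finally show "x \<bullet> (L *\<^sub>v x) = (\<Sum>i\<in>T. \<Sum>j\<in>T. x $ i * L $$ (i,j) * x $ j)" .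
  have "x \<bullet> x = (\<Sum>i\<in>{0..<m}. x $ i * x $ i)" using x by (simp add: scalar_prod_def)
  also have "\<dots> = (\<Sum>i\<in>T. x $ i * x $ i)" by (rule red) (use z in auto)
  finally show "x \<bullet> x = (\<Sum>i\<in>T. x $ i * x $ i)" .
qed

lemma lap_facts:
  assumes G: "simple_graph m E"
  shows "laplacian m E \<in> carrier_mat m m" "(laplacian m E)\<^sup>T = laplacian m E"
    "\<And>i j. i < m \<Longrightarrow> j < m \<Longrightarrow> laplacian m E $$ (i,j) =
        (if i = j then real (degree m E i) else 0) - (if E i j then 1 else 0)"
proof -
  show c: "laplacian m E \<in> carrier_mat m m"
    unfolding laplacian_def degree_matrix_def adjacency_matrix_def by (rule minus_carrier_mat) simp
  show e: "\<And>i j. i < m \<Longrightarrow> j < m \<Longrightarrow> laplacian m E $$ (i,j) =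
        (if i = j then real (degree m E i) else 0) - (if E i j then 1 else 0)"
    unfolding laplacian_def degree_matrix_def adjacency_matrix_def by simp
  show "(laplacian m E)\<^sup>T = laplacian m E"
    by (rule eq_matI) (use c e G in \<open>auto simp: simple_graph_def\<close>)
qed

lemma case_nonadj:
  assumes G: "simple_graph m E" and pq: "p < m" "q < m" "p \<noteq> q" and ne: "\<not> E p q"
    and tp: "t \<le> real (degree m E p)" and tq: "t \<le> real (degree m E q)"
  shows "t \<le> rev (sorted_list_of_multiset (proots (char_poly (laplacian m E)))) ! 1"
proof -
  note Lc = lap_facts(1)[OF G] and Le = lap_facts(3)[OF G]
  have ne2: "\<not> E q p" using ne G pq unfolding simple_graph_def by auto
  have irr: "\<not> E i i" if "i < m" for i using G that unfolding simple_graph_def by auto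
  define w1 where "w1 = (vec m (\<lambda>i. if i = p then 1 else 0) :: real vec)"
  define w2 where "w2 = (vec m (\<lambda>i. if i = q then 1 else 0) :: real vec)"
  have w: "w1 \<in> carrier_vec m" "w2 \<in> carrier_vec m" unfolding w1_def w2_def by auto
  have xi: "(a \<cdot>\<^sub>v w1 + b \<cdot>\<^sub>v w2) $ i = (if i = p then a else 0) + (if i = q then b else 0)"
    if "i < m" for a b i using that unfolding w1_def w2_def by simp
  show ?thesis
  proof (rule second_eig_ge[OF Lc lap_facts(2)[OF G] w])
    fix a b :: real
    assume ab: "(a, b) \<noteq> (0, 0)"
    show "a \<cdot>\<^sub>v w1 + b \<cdot>\<^sub>v w2 \<noteq> 0\<^sub>v m"
    proof
      assume "a \<cdot>\<^sub>v w1 + b \<cdot>\<^sub>v w2 = 0\<^sub>v m"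
      hence "(a \<cdot>\<^sub>v w1 + b \<cdot>\<^sub>v w2) $ p = 0" "(a \<cdot>\<^sub>v w1 + b \<cdot>\<^sub>v w2) $ q = 0" using pq by auto
      hence "a = 0" "b = 0" using xi pq by auto
      thus False using ab by simp
    qed
  next
    fix a b :: real
    define x where "x = a \<cdot>\<^sub>v w1 + b \<cdot>\<^sub>v w2"
    have x: "x \<in> carrier_vec m" unfolding x_def using w by simp
    have T: "{p, q} \<subseteq> {..<m}" using pq by auto
    have z: "x $ i = 0" if "i < m" "i \<notin> {p,q}" for i using xi[of i a b] that unfolding x_def by auto
    have xp: "x $ p = a" and xq: "x $ q = b" using xi pq unfolding x_def by auto
    have "x \<bullet> (laplacian m E *\<^sub>v x) = a * real (degree m E p) * a + b * real (degree m E q) * b"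
      using qf_supp(1)[OF Lc x T z] pq xp xq Le ne ne2 irr by simp
    moreover have "x \<bullet> x = a * a + b * b"
      using qf_supp(2)[OF Lc x T z] pq xp xq by simp
    moreover have "t * (a * a) \<le> real (degree m E p) * (a * a)" by (rule mult_right_mono[OF tp]) simp
    moreover have "t * (b * b) \<le> real (degree m E q) * (b * b)" by (rule mult_right_mono[OF tq]) simp
    ultimately show "t * (x \<bullet> x) \<le> x \<bullet> (laplacian m E *\<^sub>v x)" by (simp add: algebra_simps)
  qed
qed

lemma case_tri:
  assumes G: "simple_graph m E" and abc: "a < m" "b < m" "c < m" "a \<noteq> b" "a \<noteq> c" "b \<noteq> c"
    and e: "E a b" "E a c" "E b c"
    and ta: "t \<le> real (degree m E a)" and tb: "t \<le> real (degree m E b)"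
    and tc: "t \<le> real (degree m E c)"
  shows "t \<le> rev (sorted_list_of_multiset (proots (char_poly (laplacian m E)))) ! 1"
proof -
  note Lc = lap_facts(1)[OF G] and Le = lap_facts(3)[OF G]
  have e2: "E b a" "E c a" "E c b" using e G abc unfolding simple_graph_def by auto
  have irr: "\<not> E i i" if "i < m" for i using G that unfolding simple_graph_def by auto
  define w1 where "w1 = (vec m (\<lambda>i. if i = a then 1 else if i = b then -1 else 0) :: real vec)"
  define w2 where "w2 = (vec m (\<lambda>i. if i = b then 1 else if i = c then -1 else 0) :: real vec)"
  have w: "w1 \<in> carrier_vec m" "w2 \<in> carrier_vec m" unfolding w1_def w2_def by auto
  have xi: "(\<alpha> \<cdot>\<^sub>v w1 + \<beta> \<cdot>\<^sub>v w2) $ i = \<alpha> * w1 $ i + \<beta> * w2 $ i"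
    if "i < m" for \<alpha> \<beta> i using that w by simp
  have xa: "(\<alpha> \<cdot>\<^sub>v w1 + \<beta> \<cdot>\<^sub>v w2) $ a = \<alpha>" for \<alpha> \<beta>
    using xi[OF abc(1)] abc unfolding w1_def w2_def by simp
  have xb: "(\<alpha> \<cdot>\<^sub>v w1 + \<beta> \<cdot>\<^sub>v w2) $ b = \<beta> - \<alpha>" for \<alpha> \<beta>
    using xi[OF abc(2)] abc unfolding w1_def w2_def by simp
  have xc: "(\<alpha> \<cdot>\<^sub>v w1 + \<beta> \<cdot>\<^sub>v w2) $ c = - \<beta>" for \<alpha> \<beta>
    using xi[OF abc(3)] abc unfolding w1_def w2_def by simp
  show ?thesis
  proof (rule second_eig_ge[OF Lc lap_facts(2)[OF G] w])
    fix \<alpha> \<beta> :: real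
    assume ab: "(\<alpha>, \<beta>) \<noteq> (0, 0)"
    show "\<alpha> \<cdot>\<^sub>v w1 + \<beta> \<cdot>\<^sub>v w2 \<noteq> 0\<^sub>v m"
    proof
      assume "\<alpha> \<cdot>\<^sub>v w1 + \<beta> \<cdot>\<^sub>v w2 = 0\<^sub>v m"
      hence "(\<alpha> \<cdot>\<^sub>v w1 + \<beta> \<cdot>\<^sub>v w2) $ a = 0" "(\<alpha> \<cdot>\<^sub>v w1 + \<beta> \<cdot>\<^sub>v w2) $ c = 0" using abc by auto
      hence "\<alpha> = 0" "\<beta> = 0" using xa xc by auto
      thus False using ab by simp
    qed
  next
    fix \<alpha> \<beta> :: real
    define x where "x = \<alpha> \<cdot>\<^sub>v w1 + \<beta> \<cdot>\<^sub>v w2"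
    have x: "x \<in> carrier_vec m" unfolding x_def using w by simp
    have T: "{a, b, c} \<subseteq> {..<m}" using abc by auto
    have z: "x $ i = 0" if "i < m" "i \<notin> {a,b,c}" for i
      using xi[of i \<alpha> \<beta>] that unfolding x_def w1_def w2_def by auto
    define da where "da = real (degree m E a)"
    define db where "db = real (degree m E b)"
    define dc where "dc = real (degree m E c)"
    have q1: "x \<bullet> (laplacian m E *\<^sub>v x) = da * \<alpha>^2 + db * (\<beta> - \<alpha>)^2 + dc * \<beta>^2
       + 2 * (\<alpha>^2 + \<beta>^2 - \<alpha> * \<beta>)"
      using qf_supp(1)[OF Lc x T z] abc xa xb xc Le e e2 irr unfolding x_def da_def db_def dc_def
      by (simp add: algebra_simps power2_eq_square)
    have q2: "x \<bullet> x = \<alpha>^2 + (\<beta> - \<alpha>)^2 + \<beta>^2"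
      using qf_supp(2)[OF Lc x T z] abc xa xb xc unfolding x_def by (simp add: power2_eq_square)
    have "t * \<alpha>^2 \<le> da * \<alpha>^2" by (rule mult_right_mono[OF ta[folded da_def]]) simp
    moreover have "t * (\<beta> - \<alpha>)^2 \<le> db * (\<beta> - \<alpha>)^2" by (rule mult_right_mono[OF tb[folded db_def]]) simp
    moreover have "t * \<beta>^2 \<le> dc * \<beta>^2" by (rule mult_right_mono[OF tc[folded dc_def]]) simp
    moreover have "0 \<le> \<alpha>^2 + \<beta>^2 - \<alpha> * \<beta>"
    proof -
      have "0 \<le> (\<alpha> - \<beta>)^2 + \<alpha>^2 + \<beta>^2" by simp
      thus ?thesis by (simp add: power2_eq_square algebra_simps)
    qed
    ultimately show "t * (x \<bullet> x) \<le> x \<bullet> (laplacian m E *\<^sub>v x)" unfolding q1 q2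
      by (simp add: algebra_simps)
  qed
qed

theorem mainTheorem14:
  fixes m :: nat and E :: "nat \<Rightarrow> nat \<Rightarrow> bool"
  assumes "simple_graph m E" and "m \<ge> 3"
  shows "lap_eig m E 2 \<ge> real (deg_k m E 3)"
proof -
  note G = assms(1)
  define ds where "ds = map (degree m E) [0..<m]"
  define d3 where "d3 = deg_k m E 3"
  have d3: "d3 = rev (sort ds) ! (3 - 1)" unfolding d3_def deg_k_def degree_sequence_def ds_def by simp
  have "3 \<le> length (filter (\<lambda>x. d3 \<le> x) ds)" unfolding d3
    by (rule rev_sort_count) (use assms(2) in \<open>auto simp: ds_def\<close>)
  define S where "S = {v. v < m \<and> d3 \<le> degree m E v}"
  have "length (filter (\<lambda>x. d3 \<le> x) ds) = length (filter (\<lambda>v. d3 \<le> degree m E v) [0..<m])"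
    unfolding ds_def by (simp add: filter_map comp_def)
  also have "\<dots> = card (set (filter (\<lambda>v. d3 \<le> degree m E v) [0..<m]))"
    by (rule distinct_card[symmetric]) simp
  also have "set (filter (\<lambda>v. d3 \<le> degree m E v) [0..<m]) = S" unfolding S_def by auto
  finally have "3 \<le> card S" using \<open>3 \<le> length (filter (\<lambda>x. d3 \<le> x) ds)\<close> by simp
  then obtain T where T: "T \<subseteq> S" "card T = 3" by (meson obtain_subset_with_card_n)
  then obtain a b c where abc: "T = {a, b, c}" "a \<noteq> b" "b \<noteq> c" "a \<noteq> c"
    by (auto simp: card_3_iff)
  have in_S: "a \<in> S" "b \<in> S" "c \<in> S" using T abc by auto
  hence lt: "a < m" "b < m" "c < m" and
    dg: "real d3 \<le> real (degree m E a)" "real d3 \<le> real (degree m E b)" "real d3 \<le> real (degree m E c)"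
    unfolding S_def by auto
  have "real d3 \<le> rev (sorted_list_of_multiset (proots (char_poly (laplacian m E)))) ! 1"
  proof (cases "E a b")
    case False show ?thesis using case_nonadj[OF G lt(1) lt(2) abc(2) False dg(1) dg(2)] .
  next
    case ab: True
    show ?thesis
    proof (cases "E a c")
      case False show ?thesis using case_nonadj[OF G lt(1) lt(3) abc(4) False dg(1) dg(3)] .
    next
      case ac: True
      show ?thesis
      proof (cases "E b c")
        case False show ?thesis using case_nonadj[OF G lt(2) lt(3) abc(3) False dg(2) dg(3)] .
      next
        case bc: True
        show ?thesis by (rule case_tri[OF G lt abc(2) abc(4) abc(3) ab ac bc dg])
      qed
    qed
  qed
  thus ?thesis unfolding lap_eig_def laplacian_eigenvalues_def d3_def by simp
qed

end
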